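(* Let $n\ge 1$ be an integer. For every real $x$, $$J_0(x)+2\sum_{i=1}^{\infty}(-1)^iJ_{4in}(x)=\frac{1}{n}\sum_{\ell=0}^{n-1}\cos\Big(x\cos\frac{(1+4\ell)\pi}{4n}\Big),$$ i.e. $J_0(x)-2J_{4n}(x)+2J_{8n}(x)-\dots=\frac1n\sum_{\ell=0}^{n-1}\cos\big(x\cos\frac{1+4\ell}{4n}\pi\big)$, the series converging absolutely.
   Context: $J_p$ denotes the Bessel function of the first kind of integer order $p$, $J_p(x)=\sum_{k\ge0}(-1)^k\frac{(x/2)^{p+2k}}{k!\,(k+p)!}$ for $p\ge 0$. *)

theory Defs
  imports "HOL-Analysis.Analysis"
begin

definition besselJ :: "nat \<Rightarrow> real \<Rightarrow> real" where
  "besselJ p x = (\<Sum>k. (-1) ^ k * (x / 2) ^ (p + 2 * k) / (fact k * fact (k + p)))"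

end

theory Submission
  imports Defs
begin


lemma cos_pow_cis:
  "complex_of_real ((2 * cos t)^m) = (\<Sum>j\<le>m. of_nat (m choose j) * cis ((2*real j - real m) * t))"
proof -
  have "complex_of_real (2 * cos t) = cis t + cis (-t)"
    by (simp add: complex_eq_iff)
  hence "complex_of_real ((2 * cos t)^m) = (cis t + cis (-t))^m" by (metis of_real_power)
  also have "\<dots> = (\<Sum>j\<le>m. of_nat (m choose j) * cis t ^ j * cis (-t) ^ (m - j))"
    by (rule binomial_ring)
  also have "\<dots> = (\<Sum>j\<le>m. of_nat (m choose j) * cis ((2*real j - real m) * t))"
  proof (rule sum.cong[OF refl])
    fix j assume "j \<in> {..m}"
    hence "j \<le> m" by simp
    have "cis t ^ j * cis (-t) ^ (m - j) = cis ((2*real j - real m) * t)"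
    proof -
      have "cis t ^ j * cis (-t) ^ (m - j) = cis (real j * t + real (m - j) * (-t))"
        by (metis Complex.DeMoivre cis_mult)
      also have "real j * t + real (m - j) * (-t) = (2*real j - real m) * t"
        using \<open>j \<le> m\<close> by (simp add: of_nat_diff algebra_simps)
      finally show ?thesis .
    qed
    thus "of_nat (m choose j) * cis t ^ j * cis (-t) ^ (m - j) = of_nat (m choose j) * cis ((2*real j - real m) * t)"
      by (simp add: mult.assoc)
  qed
  finally show ?thesis .
qed

lemma cis_eq_1_iff: "cis t = 1 \<longleftrightarrow> (\<exists>k::int. t = real_of_int k * 2 * pi)"
proof
  assume "cis t = 1"
  hence "cos t = 1" by (metis cis.sel(1) one_complex.sel(1))
  thus "\<exists>k::int. t = real_of_int k * 2 * pi" using cos_one_2pi_int by blast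
next
  assume "\<exists>k::int. t = real_of_int k * 2 * pi"
  then obtain k::int where "t = real_of_int k * 2 * pi" by blast
  hence "t = 2 * pi * real_of_int k" by simp
  thus "cis t = 1" by (simp add: cis_multiple_2pi)
qed


lemma root_sum:
  fixes n :: nat and s :: int
  assumes "n \<ge> 1"
  shows "(\<Sum>l<n. cis (2 * of_int s * ((1 + 4*real l) * pi / (4*real n))))
       = (if int n dvd s then of_nat n * cis (of_int s * pi / (2*real n)) else 0)"
proof -
  define z where "z = cis (2 * pi * of_int s / real n)"
  define a where "a = cis (of_int s * pi / (2*real n))"
  have n0: "real n > 0" using assms by simp
  have trm: "cis (2 * of_int s * ((1 + 4*real l) * pi / (4*real n))) = a * z ^ l" for l
  proof -
    have "a * z ^ l = cis (of_int s * pi / (2*real n) + real l * (2 * pi * of_int s / real n))"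
      unfolding a_def z_def by (metis Complex.DeMoivre cis_mult)
    also have "of_int s * pi / (2*real n) + real l * (2 * pi * of_int s / real n)
       = 2 * of_int s * ((1 + 4*real l) * pi / (4*real n))"
      using n0 by (simp add: field_simps)
    finally show ?thesis by simp
  qed
  have zn: "z ^ n = 1"
  proof -
    have "z ^ n = cis (real n * (2 * pi * of_int s / real n))"
      unfolding z_def by (metis Complex.DeMoivre)
    also have "real n * (2 * pi * of_int s / real n) = 2 * pi * of_int s" using n0 by simp
    finally show ?thesis by (simp add: cis_multiple_2pi)
  qed
  have z1: "z = 1 \<longleftrightarrow> int n dvd s"
  proof
    assume "z = 1"
    then obtain k :: int where k: "2 * pi * of_int s / real n = real_of_int k * 2 * pi"
      unfolding z_def cis_eq_1_iff by blast
    hence "real_of_int s = real_of_int k * real n" using n0 by (simp add: field_simps)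
    hence "s = k * int n" by (metis of_int_eq_iff of_int_mult of_int_of_nat_eq)
    thus "int n dvd s" by simp
  next
    assume "int n dvd s"
    then obtain k where "s = int n * k" by blast
    hence "2 * pi * of_int s / real n = real_of_int k * 2 * pi" using n0 by simp
    thus "z = 1" unfolding z_def cis_eq_1_iff by blast
  qed
  have "(\<Sum>l<n. cis (2 * of_int s * ((1 + 4*real l) * pi / (4*real n)))) = a * (\<Sum>l<n. z ^ l)"
    unfolding trm by (simp add: sum_distrib_left)
  also have "\<dots> = (if int n dvd s then of_nat n * a else 0)"
    using zn z1 by (simp add: sum_gp_strict)
  finally show ?thesis by (simp add: a_def)
qed


lemma filter_reindex:
  fixes n m :: nat and h :: "nat \<Rightarrow> real"
  assumes "n \<ge> 1"
  shows "(\<Sum>s=1..m. if 2*n dvd s then h (s div (2*n)) else 0) = (\<Sum>i=1..m div (2*n). h i)"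
proof -
  have img: "(\<lambda>i. 2*n*i) ` {1..m div (2*n)} = {s\<in>{1..m}. 2*n dvd s}"
  proof (intro equalityI subsetI)
    fix s assume "s \<in> (\<lambda>i. 2*n*i) ` {1..m div (2*n)}"
    then obtain i where i: "i \<in> {1..m div (2*n)}" "s = 2*n*i" by blast
    have "2*n*i \<le> 2*n*(m div (2*n))" using i by simp
    also have "\<dots> \<le> m" by simp
    finally show "s \<in> {s\<in>{1..m}. 2*n dvd s}" using i assms by auto
  next
    fix s assume "s \<in> {s\<in>{1..m}. 2*n dvd s}"
    then obtain i where s: "s = 2*n*i" "1 \<le> s" "s \<le> m" by auto
    have "i \<ge> 1" using s by (cases i) auto
    moreover have "i \<le> m div (2*n)" using s assms
      by (metis div_le_mono nonzero_mult_div_cancel_left mult_eq_0_iff zero_neq_numeral not_one_le_zero)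
    ultimately show "s \<in> (\<lambda>i. 2*n*i) ` {1..m div (2*n)}" using s by auto
  qed
  have inj: "inj_on (\<lambda>i. 2*n*i) {1..m div (2*n)}" using assms by (auto intro: inj_onI)
  have "(\<Sum>s=1..m. if 2*n dvd s then h (s div (2*n)) else 0) = (\<Sum>s\<in>{s\<in>{1..m}. 2*n dvd s}. h (s div (2*n)))"
    using sum.inter_filter[of "{1..m}" "\<lambda>s. h (s div (2*n))" "\<lambda>s. 2*n dvd s"] by simp
  also have "\<dots> = (\<Sum>i=1..m div (2*n). h (2*n*i div (2*n)))"
    unfolding img[symmetric] by (subst sum.reindex[OF inj]) (simp add: o_def)
  also have "\<dots> = (\<Sum>i=1..m div (2*n). h i)" using assms by simp
  finally show ?thesis .
qed

lemma G_val:
  fixes n :: nat and s :: int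
  assumes "n \<ge> 1"
  shows "(if int n dvd s then cos (of_int s * pi / (2*real n)) else 0)
       = (if int (2*n) dvd s then (-1) ^ nat \<bar>s div int (2*n)\<bar> else 0)"
proof (cases "int n dvd s")
  case False
  hence "\<not> int (2*n) dvd s" by (metis dvd_mult_right of_nat_mult mult.commute)
  with False show ?thesis by simp
next
  case True
  then obtain t where t: "s = int n * t" by blast
  have n0: "real n > 0" using assms by simp
  have arg: "of_int s * pi / (2*real n) = of_int t * (pi/2)" using n0 t by simp
  show ?thesis
  proof (cases "even t")
    case True
    then obtain u where u: "t = 2*u" by blast
    have d: "int (2*n) dvd s" using t u by simp
    have q: "s div int (2*n) = u" using t u assms by simp
    have "of_int s * pi / (2*real n) = pi * of_int u" using u arg by simp
    hence "cos (of_int s * pi / (2*real n)) = cos (pi * of_int u)" by (simp only:)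
    also have "\<dots> = (if even u then 1 else -1)" by (rule cos_npi_int)
    also have "\<dots> = (-1) ^ nat \<bar>u\<bar>" by (simp add: even_nat_iff)
    finally show ?thesis using d q \<open>int n dvd s\<close> by simp
  next
    case False
    have cz: "cos (of_int t * (pi/2)) = 0" using False cos_zero_iff_int by blast
    have cz2: "cos (of_int s * pi / (2*real n)) = 0" by (subst arg, rule cz)
    moreover have "\<not> int (2*n) dvd s"
    proof
      assume "int (2*n) dvd s"
      then obtain v where "s = int (2*n) * v" by blast
      hence "int n * t = int n * (2 * v)" using t by simp
      hence "t = 2 * v" using assms by simp
      thus False using False by simp
    qed
    ultimately show ?thesis using cz2 \<open>int n dvd s\<close> by simp
  qed
qed


definition Gi :: "nat \<Rightarrow> int \<Rightarrow> real" where
  "Gi n s = (if int (2*n) dvd s then (-1) ^ nat \<bar>s div int (2*n)\<bar> else 0)"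

lemma Gi_neg: "Gi n (-s) = Gi n s"
  unfolding Gi_def by (simp add: dvd_neg_div)

lemma Gi_nat: "Gi n (int s) = (if 2*n dvd s then (-1) ^ (s div (2*n)) else 0)"
  unfolding Gi_def by (metis int_dvd_int_iff nat_int of_nat_div abs_of_nat)

lemma step_ab:
  fixes n m :: nat
  assumes "n \<ge> 1"
  shows "(\<Sum>l<n. (2*cos((1 + 4*real l) * pi / (4*real n)))^(2*m))
       = real n * (\<Sum>j\<le>2*m. real (2*m choose j) * Gi n (int j - int m))"
proof -
  let ?th = "\<lambda>l. (1 + 4*real l) * pi / (4*real n)"
  have "complex_of_real (\<Sum>l<n. (2*cos(?th l))^(2*m))
      = (\<Sum>l<n. \<Sum>j\<le>2*m. of_nat (2*m choose j) * cis ((2*real j - real (2*m)) * ?th l))"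
    unfolding of_real_sum by (intro sum.cong refl) (rule cos_pow_cis)
  also have "\<dots> = (\<Sum>j\<le>2*m. of_nat (2*m choose j) * (\<Sum>l<n. cis (2 * of_int (int j - int m) * ?th l)))"
    by (subst sum.swap) (simp add: sum_distrib_left algebra_simps)
  also have "\<dots> = (\<Sum>j\<le>2*m. of_nat (2*m choose j) *
       (if int n dvd (int j - int m) then of_nat n * cis (of_int (int j - int m) * pi / (2*real n)) else 0))"
    by (intro sum.cong refl arg_cong2[where f="(*)"]) (rule root_sum[OF assms])
  finally have eq: "complex_of_real (\<Sum>l<n. (2*cos(?th l))^(2*m)) = \<dots>" .
  have "(\<Sum>l<n. (2*cos(?th l))^(2*m)) = Re (complex_of_real (\<Sum>l<n. (2*cos(?th l))^(2*m)))" by simp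
  also have "\<dots> = (\<Sum>j\<le>2*m. real (2*m choose j) * (real n *
       (if int n dvd (int j - int m) then cos (of_int (int j - int m) * pi / (2*real n)) else 0)))"
    unfolding eq Re_sum by (intro sum.cong refl) auto
  also have "\<dots> = real n * (\<Sum>j\<le>2*m. real (2*m choose j) * Gi n (int j - int m))"
    unfolding G_val[OF assms] Gi_def by (simp add: sum_distrib_left algebra_simps)
  finally show ?thesis .
qed


lemma step_d:
  fixes n m :: nat
  shows "(\<Sum>j\<le>2*m. real (2*m choose j) * Gi n (int j - int m))
       = real (2*m choose m) + 2*(\<Sum>s=1..m. real(2*m choose (m+s)) * Gi n (int s))"
proof -
  let ?f = "\<lambda>j. real (2*m choose j) * Gi n (int j - int m)"
  have U: "{..2*m} = {..<m} \<union> {m..2*m}" by auto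
  have "(\<Sum>j\<le>2*m. ?f j) = (\<Sum>j<m. ?f j) + (\<Sum>j=m..2*m. ?f j)"
    unfolding U by (rule sum.union_disjoint) auto
  moreover have "(\<Sum>j<m. ?f j) = (\<Sum>s=1..m. ?f (m - s))"
    by (rule sum.reindex_bij_witness[of _ "\<lambda>j. m - j" "\<lambda>s. m - s"]) auto
  moreover have "(\<Sum>s=1..m. ?f (m - s)) = (\<Sum>s=1..m. real(2*m choose (m+s)) * Gi n (int s))"
  proof (intro sum.cong refl)
    fix s assume "s \<in> {1..m}"
    hence s: "s \<le> m" by simp
    have "2*m choose (m - s) = 2*m choose (2*m - (m - s))" using s by (intro binomial_symmetric) simp
    also have "2*m - (m - s) = m + s" using s by simp
    finally have c: "2*m choose (m - s) = 2*m choose (m + s)" .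
    have "int (m - s) - int m = - int s" using s by simp
    thus "?f (m - s) = real(2*m choose (m+s)) * Gi n (int s)" using c by (simp add: Gi_neg)
  qed
  moreover have "(\<Sum>j=m..2*m. ?f j) = (\<Sum>s=0..m. ?f (m + s))"
    by (rule sum.reindex_bij_witness[of _ "\<lambda>s. m + s" "\<lambda>j. j - m"]) auto
  moreover have "(\<Sum>s=0..m. ?f (m + s)) = ?f m + (\<Sum>s=1..m. ?f (m + s))"
    by (subst sum.atLeast_Suc_atMost) auto
  moreover have "?f m = real (2*m choose m)" by (simp add: Gi_def)
  moreover have "(\<Sum>s=1..m. ?f (m + s)) = (\<Sum>s=1..m. real(2*m choose (m+s)) * Gi n (int s))"
    by simp
  ultimately show ?thesis by simp
qed

lemma trig_identity:
  fixes n m :: nat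
  assumes "n \<ge> 1"
  shows "(\<Sum>l<n. (2*cos((1 + 4*real l) * pi / (4*real n)))^(2*m))
       = real n * (real (2*m choose m) + 2*(\<Sum>i=1..m div (2*n). (-1)^i * real(2*m choose (m+2*n*i))))"
proof -
  have "(\<Sum>s=1..m. real(2*m choose (m+s)) * Gi n (int s))
      = (\<Sum>s=1..m. if 2*n dvd s then (-1)^(s div (2*n)) * real(2*m choose (m + 2*n*(s div (2*n)))) else 0)"
    by (intro sum.cong refl) (auto simp: Gi_nat)
  also have "\<dots> = (\<Sum>i=1..m div (2*n). (-1)^i * real(2*m choose (m+2*n*i)))"
    by (rule filter_reindex[OF assms])
  finally show ?thesis using step_ab[OF assms] step_d by simp
qed


definition cc :: "nat \<Rightarrow> real" where "cc i = (if i = 0 then 1 else 2 * (-1)^i)"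

lemma fiber:
  fixes n m :: nat and x :: real
  assumes "n \<ge> 1"
  shows "(\<Sum>i\<le>m div (2*n). cc i * ((-1)^(m - 2*n*i) * (x/2)^(4*i*n + 2*(m - 2*n*i))
            / (fact (m - 2*n*i) * fact (m - 2*n*i + 4*i*n))))
   = 1/real n * (\<Sum>l<n. (-1)^m / fact (2*m) * (x * cos((1 + 4*real l)*pi/(4*real n)))^(2*m))"
proof -
  define K where "K = (-1)^m * (x/2)^(2*m) / fact (2*m)"
  define D where "D = m div (2*n)"
  have le: "2*n*i \<le> m" if "i \<le> D" for i
  proof -
    have "2*n*i \<le> 2*n*D" using that by simp
    also have "\<dots> \<le> m" unfolding D_def by simp
    finally show ?thesis .
  qed
  have tm: "cc i * ((-1)^(m - 2*n*i) * (x/2)^(4*i*n + 2*(m - 2*n*i))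
            / (fact (m - 2*n*i) * fact (m - 2*n*i + 4*i*n)))
          = K * (cc i * real (2*m choose (m + 2*n*i)))" if "i \<le> D" for i
  proof -
    have l: "2*n*i \<le> m" using le[OF that] .
    have e1: "4*i*n + 2*(m - 2*n*i) = 2*m" using l by (simp add: algebra_simps)
    have e2: "m - 2*n*i + 4*i*n = m + 2*n*i" using l by (simp add: algebra_simps)
    have e3: "(-1::real)^(m - 2*n*i) = (-1)^m"
    proof -
      have "(-1::real)^m = (-1)^(m - 2*n*i + 2*(n*i))" using l by simp
      also have "\<dots> = (-1)^(m - 2*n*i)" by (simp add: power_add power_mult)
      finally show ?thesis by simp
    qed
    have b: "real (2*m choose (m + 2*n*i)) = fact (2*m) / (fact (m + 2*n*i) * fact (m - 2*n*i))"
    proof -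
      have "m + 2*n*i \<le> 2*m" using l by simp
      hence "real (2*m choose (m + 2*n*i)) = fact (2*m) / (fact (m + 2*n*i) * fact (2*m - (m + 2*n*i)))"
        by (rule binomial_fact)
      moreover have "2*m - (m + 2*n*i) = m - 2*n*i" using l by simp
      ultimately show ?thesis by simp
    qed
    show ?thesis unfolding e1 e2 e3 b K_def by (simp add: field_simps)
  qed
  have "(\<Sum>i\<le>D. cc i * ((-1)^(m - 2*n*i) * (x/2)^(4*i*n + 2*(m - 2*n*i))
            / (fact (m - 2*n*i) * fact (m - 2*n*i + 4*i*n))))
      = (\<Sum>i\<le>D. K * (cc i * real (2*m choose (m + 2*n*i))))"
    by (intro sum.cong refl) (rule tm, simp)
  also have "\<dots> = K * (\<Sum>i\<le>D. cc i * real (2*m choose (m + 2*n*i)))" by (simp add: sum_distrib_left)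
  also have "(\<Sum>i\<le>D. cc i * real (2*m choose (m + 2*n*i)))
       = real (2*m choose m) + 2*(\<Sum>i=1..D. (-1)^i * real(2*m choose (m+2*n*i)))"
  proof -
    have "(\<Sum>i\<le>D. cc i * real (2*m choose (m + 2*n*i))) = (\<Sum>i=0..D. cc i * real (2*m choose (m + 2*n*i)))"
      by (simp add: atMost_atLeast0)
    also have "\<dots> = cc 0 * real (2*m choose m) + (\<Sum>i=1..D. cc i * real (2*m choose (m + 2*n*i)))"
      by (subst sum.atLeast_Suc_atMost) auto
    also have "(\<Sum>i=1..D. cc i * real (2*m choose (m + 2*n*i))) = 2*(\<Sum>i=1..D. (-1)^i * real(2*m choose (m+2*n*i)))"
      unfolding sum_distrib_left by (intro sum.cong refl) (simp add: cc_def)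
    finally show ?thesis by (simp add: cc_def)
  qed
  also have "real (2*m choose m) + 2*(\<Sum>i=1..D. (-1)^i * real(2*m choose (m+2*n*i)))
      = 1/real n * (\<Sum>l<n. (2*cos((1 + 4*real l) * pi / (4*real n)))^(2*m))"
    using trig_identity[OF assms, of m] assms unfolding D_def by simp
  also have "K * (1/real n * (\<Sum>l<n. (2*cos((1 + 4*real l) * pi / (4*real n)))^(2*m)))
     = 1/real n * (\<Sum>l<n. (-1)^m / fact (2*m) * (x * cos((1 + 4*real l)*pi/(4*real n)))^(2*m))"
  proof -
    have "K * (1/real n * (\<Sum>l<n. (2*cos((1 + 4*real l) * pi / (4*real n)))^(2*m)))
      = 1/real n * (\<Sum>l<n. K * (2*cos((1 + 4*real l) * pi / (4*real n)))^(2*m))"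
      by (simp add: sum_distrib_left)
    also have "(\<Sum>l<n. K * (2*cos((1 + 4*real l) * pi / (4*real n)))^(2*m))
       = (\<Sum>l<n. (-1)^m / fact (2*m) * (x * cos((1 + 4*real l)*pi/(4*real n)))^(2*m))"
    proof (intro sum.cong refl)
      fix l
      show "K * (2*cos((1 + 4*real l) * pi / (4*real n)))^(2*m) = (-1)^m / fact (2*m) * (x * cos((1 + 4*real l)*pi/(4*real n)))^(2*m)"
        unfolding K_def power_mult_distrib power_divide by simp
    qed
    finally show ?thesis .
  qed
  finally show ?thesis unfolding D_def .
qed


lemma expser: "summable (\<lambda>k. (a::real)^k / fact k)"
proof -
  have "(\<lambda>k. a^k / fact k) = (\<lambda>k. inverse (fact k) * a^k)"
    by (rule ext) (rule divide_inverse_commute)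
  thus ?thesis using summable_exp[of a] by simp
qed

lemma bessel_has_sum:
  "((\<lambda>k. (-1)^k * (x/2)^(p+2*k)/(fact k * fact (k+p))) has_sum besselJ p x) UNIV"
proof -
  let ?t = "\<lambda>k. (-1)^k * (x/2)^(p+2*k)/(fact k * fact (k+p))"
  have bd: "norm (?t k) \<le> \<bar>x/2\<bar>^p * (((x/2)^2)^k / fact k)" for k
  proof -
    have "norm (?t k) = \<bar>x/2\<bar>^(p+2*k) / (fact k * fact (k+p))"
    proof -
      have a1: "\<bar>(x/2)^(p+2*k)\<bar> = \<bar>x/2\<bar>^(p+2*k)" by (rule power_abs)
      have a2: "\<bar>(-1::real)^k\<bar> = 1" by (simp add: power_abs)
      have a3: "\<bar>fact k * fact (k+p)\<bar> = (fact k * fact (k+p) :: real)"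
        by (rule abs_of_nonneg) (rule mult_nonneg_nonneg; rule fact_ge_zero)
      show ?thesis unfolding real_norm_def abs_divide abs_mult a1 a2 a3 by simp
    qed
    also have "\<bar>x/2\<bar>^(p+2*k) = \<bar>x/2\<bar>^p * (((x/2)^2)^k)"
      by (simp only: power_add power_mult power2_abs)
    finally have "norm (?t k) = \<bar>x/2\<bar>^p * (((x/2)^2)^k) / (fact k * fact (k+p))" .
    also have "\<dots> \<le> \<bar>x/2\<bar>^p * (((x/2)^2)^k) / (fact k * 1)"
    proof (rule divide_left_mono)
      show "fact k * 1 \<le> fact k * (fact (k+p) :: real)"
        by (rule mult_left_mono) (simp_all add: fact_ge_1)
      show "0 \<le> \<bar>x/2\<bar>^p * (((x/2)^2)^k)" by simp
      show "0 < fact k * (fact (k+p) :: real) * (fact k * 1)" by simp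
    qed
    finally show ?thesis by simp
  qed
  have s: "summable (\<lambda>k. norm (?t k))"
  proof (rule summable_comparison_test')
    show "summable (\<lambda>k. \<bar>x/2\<bar>^p * (((x/2)^2)^k / fact k))" by (rule summable_mult[OF expser])
    fix k :: nat
    show "norm (norm (?t k)) \<le> \<bar>x/2\<bar>^p * (((x/2)^2)^k / fact k)" using bd[of k] by simp
  qed
  have "?t sums besselJ p x"
    unfolding besselJ_def by (rule summable_sums[OF summable_norm_cancel[OF s]])
  thus ?thesis by (rule norm_summable_imp_has_sum[OF s])
qed


definition FF :: "nat \<Rightarrow> real \<Rightarrow> nat \<Rightarrow> nat \<Rightarrow> real" where
  "FF n x i k = cc i * ((-1)^k * (x/2)^(4*i*n + 2*k) / (fact k * fact (k + 4*i*n)))"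

lemma G_summable:
  fixes A B :: real
  assumes "A \<ge> 0" "B \<ge> 0"
  shows "(\<lambda>(i,k). 2 * (B^i / fact i) * (A^k / fact k)) summable_on (UNIV \<times> UNIV)"
proof (rule nonneg_bdd_above_summable_on)
  show "\<And>z. z \<in> UNIV \<times> UNIV \<Longrightarrow> 0 \<le> (\<lambda>(i,k). 2 * (B^i / fact i) * (A^k / fact k)) z"
    using assms by auto
  let ?b = "\<lambda>i. B^i / fact i" and ?a = "\<lambda>k. A^k / fact k"
  show "bdd_above (sum (\<lambda>(i,k). 2 * (B^i / fact i) * (A^k / fact k)) ` {F. F \<subseteq> UNIV \<times> UNIV \<and> finite F})"
  proof (rule bdd_aboveI2)
    fix F :: "(nat \<times> nat) set" assume "F \<in> {F. F \<subseteq> UNIV \<times> UNIV \<and> finite F}"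
    hence fin: "finite F" by simp
    have "sum (\<lambda>(i,k). 2 * (B^i / fact i) * (A^k / fact k)) F
        \<le> sum (\<lambda>(i,k). 2 * (B^i / fact i) * (A^k / fact k)) (fst ` F \<times> snd ` F)"
      by (rule sum_mono2) (use fin assms in \<open>auto simp: subset_fst_snd\<close>)
    also have "\<dots> = (\<Sum>i\<in>fst ` F. \<Sum>k\<in>snd ` F. 2 * (B^i / fact i) * (A^k / fact k))"
      by (rule sum.cartesian_product[symmetric])
    also have "\<dots> = 2 * (\<Sum>i\<in>fst ` F. \<Sum>k\<in>snd ` F. (B^i / fact i) * (A^k / fact k))"
      by (simp only: sum_distrib_left mult.assoc)
    also have "\<dots> = 2 * (sum ?b (fst ` F) * sum ?a (snd ` F))"
      by (simp only: sum_product)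
    also have "\<dots> \<le> 2 * (suminf ?b * suminf ?a)"
    proof -
      have "sum ?b (fst ` F) \<le> suminf ?b"
        by (rule sum_le_suminf[OF expser]) (use fin assms in auto)
      moreover have "sum ?a (snd ` F) \<le> suminf ?a"
        by (rule sum_le_suminf[OF expser]) (use fin assms in auto)
      moreover have "0 \<le> sum ?b (fst ` F)" "0 \<le> sum ?a (snd ` F)"
        using assms by (auto intro: sum_nonneg)
      ultimately show ?thesis by (simp add: mult_mono')
    qed
    finally show "sum (\<lambda>(i,k). 2 * (B^i / fact i) * (A^k / fact k)) F \<le> 2 * (suminf ?b * suminf ?a)" .
  qed
qed

lemma FF_bound:
  assumes "n \<ge> 1"
  shows "norm (FF n x i k) \<le> 2 * ((\<bar>x/2\<bar>^(4*n))^i / fact i) * (((x/2)^2)^k / fact k)"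
proof -
  have c: "\<bar>cc i\<bar> \<le> 2" by (simp add: cc_def abs_mult)
  have pw: "\<bar>(x/2)^(4*i*n + 2*k)\<bar> = (\<bar>x/2\<bar>^(4*n))^i * ((x/2)^2)^k"
  proof -
    have "\<bar>(x/2)^(4*i*n + 2*k)\<bar> = \<bar>x/2\<bar>^(4*n*i) * \<bar>x/2\<bar>^(2*k)"
    proof -
      have e: "4*i*n = 4*n*i" by simp
      show ?thesis by (simp only: power_add e abs_mult power_abs)
    qed
    also have "\<dots> = (\<bar>x/2\<bar>^(4*n))^i * ((x/2)^2)^k"
      by (simp only: power_mult power2_abs)
    finally show ?thesis .
  qed
  have fi: "fact i \<le> (fact (k + 4*i*n) :: real)"
  proof -
    have "i \<le> k + 4*i*n" using assms by (simp add: trans_le_add2)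
    thus ?thesis by (rule fact_mono)
  qed
  have "norm (FF n x i k) = \<bar>cc i\<bar> * (\<bar>(x/2)^(4*i*n + 2*k)\<bar> / (fact k * fact (k + 4*i*n)))"
    unfolding FF_def real_norm_def abs_mult abs_divide by (simp add: power_abs)
  also have "\<dots> \<le> 2 * (\<bar>(x/2)^(4*i*n + 2*k)\<bar> / (fact k * fact i))"
  proof (rule mult_mono[OF c])
    show "\<bar>(x/2)^(4*i*n + 2*k)\<bar> / (fact k * fact (k + 4*i*n)) \<le> \<bar>(x/2)^(4*i*n + 2*k)\<bar> / (fact k * fact i)"
    proof (rule divide_left_mono)
      show "fact k * fact i \<le> fact k * (fact (k + 4*i*n) :: real)"
        by (rule mult_left_mono[OF fi]) simp
      show "0 \<le> \<bar>(x/2)^(4*i*n + 2*k)\<bar>" by simp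
      show "0 < fact k * (fact (k + 4*i*n) :: real) * (fact k * fact i)" by simp
    qed
    show "0 \<le> (2::real)" by simp
    show "0 \<le> \<bar>(x/2)^(4*i*n + 2*k)\<bar> / (fact k * fact (k + 4*i*n))" by simp
  qed
  also have "\<dots> = 2 * ((\<bar>x/2\<bar>^(4*n))^i / fact i) * (((x/2)^2)^k / fact k)"
    unfolding pw by (simp add: mult.commute mult.assoc)
  finally show ?thesis .
qed

lemma FF_summable:
  assumes "n \<ge> 1"
  shows "(\<lambda>(i,k). FF n x i k) summable_on (UNIV \<times> UNIV)"
proof -
  let ?G = "\<lambda>(i,k). 2 * ((\<bar>x/2\<bar>^(4*n))^i / fact i) * (((x/2)^2)^k / fact k)"
  have Gs: "?G summable_on (UNIV \<times> UNIV)" by (rule G_summable) auto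
  have Gn: "(\<lambda>z. norm (?G z)) summable_on (UNIV \<times> UNIV)"
  proof -
    have "(\<lambda>z. norm (?G z)) = ?G" by (rule ext) auto
    thus ?thesis using Gs by simp
  qed
  have "(\<lambda>z. norm ((\<lambda>(i,k). FF n x i k) z)) summable_on (UNIV \<times> UNIV)"
  proof (rule Infinite_Sum.abs_summable_on_comparison_test[OF Gn])
    fix z :: "nat \<times> nat" assume "z \<in> UNIV \<times> UNIV"
    obtain i k where z: "z = (i,k)" by (cases z)
    have "norm (?G z) = ?G z" using z by simp
    thus "norm ((\<lambda>(i,k). FF n x i k) z) \<le> norm (?G z)" using FF_bound[OF assms, of x i k] z by simp
  qed
  thus ?thesis by (rule Infinite_Sum.abs_summable_summable)
qed


theorem mainTheorem11:
  fixes n :: nat and x :: real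
  assumes "n \<ge> 1"
  shows "summable (\<lambda>i. \<bar>besselJ (4 * (Suc i) * n) x\<bar>)
    \<and> besselJ 0 x + 2 * (\<Sum>i. (-1) ^ (Suc i) * besselJ (4 * (Suc i) * n) x)
        = (1 / real n) * (\<Sum>l<n. cos (x * cos ((1 + 4 * real l) * pi / (4 * real n))))"
proof -
  define S where "S = infsum (\<lambda>(i,k). FF n x i k) (UNIV \<times> UNIV)"
  define R where "R i = cc i * besselJ (4*i*n) x" for i
  have Fs: "(\<lambda>(i,k). FF n x i k) summable_on (UNIV \<times> UNIV)" by (rule FF_summable[OF assms])
  have row: "infsum (FF n x i) UNIV = R i" for i
  proof -
    have "((\<lambda>k. cc i * ((-1)^k * (x/2)^(4*i*n + 2*k) / (fact k * fact (k + 4*i*n)))) has_sum (cc i * besselJ (4*i*n) x)) UNIV"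
      by (rule has_sum_cmult_right[OF bessel_has_sum])
    hence "(FF n x i has_sum R i) UNIV" unfolding R_def FF_def[abs_def] by simp
    thus ?thesis by (rule infsumI)
  qed
  have Rsum: "R summable_on UNIV" and RS: "infsum R UNIV = S"
  proof -
    have "(\<lambda>i. infsum (FF n x i) UNIV) summable_on UNIV"
      by (rule summable_on_Sigma_banach) (use Fs in simp)
    thus "R summable_on UNIV" using row by simp
    have "infsum (\<lambda>i. infsum (FF n x i) UNIV) UNIV = S"
      unfolding S_def by (rule infsum_Sigma'_banach) (use Fs in simp)
    thus "infsum R UNIV = S" using row by simp
  qed
  have "(\<lambda>i. norm (R i)) summable_on UNIV"
    using Rsum summable_on_iff_abs_summable_on_real by blast
  hence "summable (\<lambda>i. norm (R i))"
    using summable_on_UNIV_nonneg_real_iff[of "\<lambda>i. norm (R i)"] by simp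
  hence "summable (\<lambda>i. norm (R (Suc i)))" by (subst summable_Suc_iff)
  hence sm: "summable (\<lambda>i. 1/2 * norm (R (Suc i)))" by (rule summable_mult)
  have eq: "(\<lambda>i. 1/2 * norm (R (Suc i))) = (\<lambda>i. \<bar>besselJ (4 * (Suc i) * n) x\<bar>)"
    unfolding R_def cc_def by (rule ext) (simp add: abs_mult)
  have P1: "summable (\<lambda>i. \<bar>besselJ (4 * (Suc i) * n) x\<bar>)" using sm unfolding eq .
  have "R sums S" using has_sum_imp_sums[OF has_sum_infsum[OF Rsum]] RS by simp
  hence "(\<lambda>i. R (Suc i)) sums (S - R 0)" using sums_Suc_iff[of R "S - R 0"] by simp
  hence "(\<lambda>i. 1/2 * R (Suc i)) sums (1/2 * (S - R 0))" by (rule sums_mult)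
  moreover have "1/2 * R (Suc i) = (-1) ^ (Suc i) * besselJ (4 * (Suc i) * n) x" for i
    unfolding R_def cc_def by simp
  ultimately have "(\<lambda>i. (-1) ^ (Suc i) * besselJ (4 * (Suc i) * n) x) sums (1/2 * (S - R 0))" by simp
  hence L: "besselJ 0 x + 2 * (\<Sum>i. (-1) ^ (Suc i) * besselJ (4 * (Suc i) * n) x) = S"
    unfolding R_def cc_def by (simp add: sums_iff)
  let ?Sg = "Sigma UNIV (\<lambda>m. {..m div (2*n)})"
  define h where "h = (\<lambda>(m::nat, i::nat). (i, m - 2*n*i))"
  have bij: "bij_betw h ?Sg (UNIV \<times> UNIV)"
  proof (rule bij_betw_byWitness[where f'="\<lambda>(i,k). (2*n*i + k, i)"])
    show "\<forall>a\<in>?Sg. (\<lambda>(i,k). (2*n*i + k, i)) (h a) = a"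
    proof
      fix a assume "a \<in> ?Sg"
      then obtain m i where a: "a = (m,i)" "i \<le> m div (2*n)" by auto
      have "2*n*i \<le> 2*n*(m div (2*n))" using a by simp
      also have "\<dots> \<le> m" by simp
      finally show "(\<lambda>(i,k). (2*n*i + k, i)) (h a) = a" using a unfolding h_def by simp
    qed
    show "\<forall>a'\<in>UNIV \<times> UNIV. h ((\<lambda>(i,k). (2*n*i + k, i)) a') = a'" unfolding h_def by auto
    show "h ` ?Sg \<subseteq> UNIV \<times> UNIV" by simp
    show "(\<lambda>(i,k). (2*n*i + k, i)) ` (UNIV \<times> UNIV) \<subseteq> ?Sg"
    proof
      fix z assume "z \<in> (\<lambda>(i,k). (2*n*i + k, i)) ` (UNIV \<times> UNIV)"
      then obtain i k where z: "z = (2*n*i + k, i)" by auto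
      have "(2*n*i + k) div (2*n) = i + k div (2*n)" using assms by simp
      thus "z \<in> ?Sg" using z by simp
    qed
  qed
  define f where "f m i = FF n x i (m - 2*n*i)" for m i
  have fh: "(\<lambda>z. (\<lambda>(i,k). FF n x i k) (h z)) = (\<lambda>(m,i). f m i)"
    unfolding h_def f_def by (rule ext) auto
  have Fs2: "(\<lambda>(m,i). f m i) summable_on ?Sg"
    using summable_on_reindex_bij_betw[OF bij, of "\<lambda>(i,k). FF n x i k"] Fs fh by simp
  have "infsum (\<lambda>(m,i). f m i) ?Sg = S"
    using infsum_reindex_bij_betw[OF bij, of "\<lambda>(i,k). FF n x i k"] fh unfolding S_def by simp
  moreover have "infsum (\<lambda>m. infsum (f m) {..m div (2*n)}) UNIV = infsum (\<lambda>(m,i). f m i) ?Sg"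
    by (rule infsum_Sigma'_banach[OF Fs2])
  moreover have bs: "(\<lambda>m. infsum (f m) {..m div (2*n)}) summable_on UNIV"
    by (rule summable_on_Sigma_banach[OF Fs2])
  ultimately have bsum: "(\<lambda>m. sum (f m) {..m div (2*n)}) sums S"
    using has_sum_imp_sums[OF has_sum_infsum[OF bs]] by simp
  have fib: "sum (f m) {..m div (2*n)}
     = 1/real n * (\<Sum>l<n. (-1)^m / fact (2*m) * (x * cos((1 + 4*real l)*pi/(4*real n)))^(2*m))" for m
    unfolding f_def FF_def by (rule fiber[OF assms])
  have "(\<lambda>m. 1/real n * (\<Sum>l<n. (-1)^m / fact (2*m) * (x * cos((1 + 4*real l)*pi/(4*real n)))^(2*m)))
      sums (1/real n * (\<Sum>l<n. cos (x * cos ((1 + 4 * real l) * pi / (4 * real n)))))"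
    by (intro sums_mult sums_sum cos_paired)
  hence "(\<lambda>m. sum (f m) {..m div (2*n)}) sums (1/real n * (\<Sum>l<n. cos (x * cos ((1 + 4 * real l) * pi / (4 * real n)))))"
    by (simp only: fib)
  hence "S = 1/real n * (\<Sum>l<n. cos (x * cos ((1 + 4 * real l) * pi / (4 * real n))))"
    using bsum sums_unique2 by blast
  thus ?thesis using P1 L by simp
qed

end
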